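(* There exist at least two inequivalent extremal Type~II $\mathbb{Z}_4$-codes of length $40$ whose residue codes have dimension $7$.
   Context: A $\mathbb{Z}_4$-code of length $n$ is a $\mathbb{Z}_4$-submodule of $\mathbb{Z}_4^n$; it is self-dual if it equals its dual with respect to $x\cdot y=\sum x_iy_i \pmod 4$. The Euclidean weight of $x$ is $n_1(x)+4n_2(x)+n_3(x)$, $n_\alpha(x)$ being the number of coordinates equal to $\alpha$. A Type~II $\mathbb{Z}_4$-code is a self-dual code all of whose codewords have Euclidean weight divisible by $8$; it is extremal if its minimum Euclidean weight equals $8\lfloor n/24\rfloor+8$ (so $16$ for $n=40$). The residue code is $C^{(1)}=\{c\bmod 2: c\in C\}$. Two $\mathbb{Z}_4$-codes are equivalent if one can be obtained from the other by permuting coordinates and changing the signs of some coordinates. *)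

theory Defs
  imports "HOL-Analysis.Finite_Cartesian_Product" "HOL-Library.Numeral_Type"
begin

text \<open>Vectors of length n over Z4 are elements of type 4^'n (the numeral type 4 is the
ring of integers mod 4); the length is CARD('n).\<close>

definition z4_inner :: "4^'n::finite \<Rightarrow> 4^'n \<Rightarrow> 4" where
  "z4_inner x y = (\<Sum>i\<in>UNIV. x$i * y$i)"

definition z4_code :: "(4^'n::finite) set \<Rightarrow> bool" where
  "z4_code C \<longleftrightarrow> 0 \<in> C \<and> (\<forall>x\<in>C. \<forall>y\<in>C. x + y \<in> C) \<and> (\<forall>c::4. \<forall>x\<in>C. c *s x \<in> C)"

definition z4_dual :: "(4^'n::finite) set \<Rightarrow> (4^'n) set" where
  "z4_dual C = {x. \<forall>y\<in>C. z4_inner x y = 0}"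

definition self_dual :: "(4^'n::finite) set \<Rightarrow> bool" where
  "self_dual C \<longleftrightarrow> z4_code C \<and> C = z4_dual C"

definition eucl_weight :: "4^'n::finite \<Rightarrow> nat" where
  "eucl_weight x = card {i. x$i = 1} + 4 * card {i. x$i = 2} + card {i. x$i = 3}"

definition type_II :: "(4^'n::finite) set \<Rightarrow> bool" where
  "type_II C \<longleftrightarrow> self_dual C \<and> (\<forall>x\<in>C. 8 dvd eucl_weight x)"

definition min_eucl_weight :: "(4^'n::finite) set \<Rightarrow> nat" where
  "min_eucl_weight C = Min (eucl_weight ` (C - {0}))"

definition extremal_type_II :: "(4^'n::finite) set \<Rightarrow> bool" where
  "extremal_type_II C \<longleftrightarrow> type_II C \<and>
     min_eucl_weight C = 8 * (CARD('n) div 24) + 8"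

definition red2 :: "4 \<Rightarrow> 2" where
  "red2 a = (if a = 0 \<or> a = 2 then 0 else 1)"

definition residue :: "(4^'n::finite) set \<Rightarrow> (2^'n) set" where
  "residue C = (\<lambda>x. \<chi> i. red2 (x$i)) ` C"

definition binary_dim :: "(2^'n::finite) set \<Rightarrow> nat" where
  "binary_dim D = (THE k. card D = 2 ^ k)"

definition z4_equivalent :: "(4^'n::finite) set \<Rightarrow> (4^'n) set \<Rightarrow> bool" where
  "z4_equivalent C D \<longleftrightarrow> (\<exists>\<sigma> s. bij (\<sigma>::'n \<Rightarrow> 'n) \<and> (\<forall>i. s i = (1::4) \<or> s i = -1) \<and>
      D = (\<lambda>x. \<chi> i. s i * x $ \<sigma> i) ` C)"

end

theory Submission
  imports Defs "HOL-Library.FuncSet"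
begin

lemma rep4_of_int: "Rep_bit0 (of_int z :: 4) = z mod 4"
  using bit0.Rep_Abs_mod[of z, where 'a="2"] by (simp add: bit0.of_int_eq)
lemma rep2_of_int: "Rep_bit0 (of_int z :: 2) = z mod 2"
  using bit0.Rep_Abs_mod[of z, where 'a="1"] by (simp add: bit0.of_int_eq)

lemma z4_cases: "(a::4) = 0 \<or> a = 1 \<or> a = 2 \<or> a = 3"
proof (induct a rule: bit0_induct)
  case (of_int z)
  then have "z = 0 \<or> z = 1 \<or> z = 2 \<or> z = 3" by auto
  then show ?case by auto
qed

lemma z2_cases: "(a::2) = 0 \<or> a = 1"
proof (induct a rule: bit0_induct)
  case (of_int z)
  then have "z = 0 \<or> z = 1" by auto
  then show ?case by auto
qed

lemma L0: "Rep_bit0 (0::4) = 0" using rep4_of_int[of 0] by simp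
lemma L1: "Rep_bit0 (1::4) = 1" using rep4_of_int[of 1] by simp
lemma L2: "Rep_bit0 (2::4) = 2" using rep4_of_int[of 2] by simp
lemma L3: "Rep_bit0 (3::4) = 3" using rep4_of_int[of 3] by simp
lemma Lnum: "Rep_bit0 (numeral w :: 4) = numeral w mod 4" using rep4_of_int[of "numeral w"] by simp
lemmas Ls = L0 L1 L2 L3 Lnum

lemma red2_add: "red2 (a + b) = red2 a + red2 b"
  using z4_cases[of a] z4_cases[of b] by (auto simp: red2_def)
lemma red2_mult: "red2 (a * b) = red2 a * red2 b"
  using z4_cases[of a] z4_cases[of b] by (auto simp: red2_def)
lemma red2_0[simp]: "red2 0 = 0" by (simp add: red2_def)
lemma red2_1[simp]: "red2 1 = 1" by (simp add: red2_def)
lemma red2_m1[simp]: "red2 (-1) = 1" by (simp add: red2_def)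
lemma red2_diff: "red2 (a - b) = red2 a + red2 b"
  using z4_cases[of a] z4_cases[of b] by (auto simp: red2_def)
lemma two_mult_0: "2 * (a::4) = 0 \<longleftrightarrow> red2 a = 0"
  using z4_cases[of a] by (auto simp: red2_def)
lemma red2_two_mult: "red2 (2 * a) = 0"
  using z4_cases[of a] by (auto simp: red2_def)
lemma red2_0_iff: "red2 a = 0 \<longleftrightarrow> a = 0 \<or> a = 2"
  using z4_cases[of a] by (auto simp: red2_def)
lemma red2_1_iff: "red2 a = 1 \<longleftrightarrow> a = 1 \<or> a = 3"
  using z4_cases[of a] by (auto simp: red2_def)

definition half :: "4 \<Rightarrow> 4" where "half a = (if a = 2 then 1 else 0)"
lemma half: "red2 a = 0 \<Longrightarrow> a = 2 * half a"
  using z4_cases[of a] by (auto simp: red2_def half_def)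
lemma red2_half: "red2 (half a) = (if a = 2 then 1 else 0)"
  by (simp add: half_def)

definition up :: "2 \<Rightarrow> 4" where "up b = (if b = 1 then 1 else 0)"
lemma red2_up[simp]: "red2 (up b) = b"
  using z2_cases[of b] by (auto simp: up_def)

lemma red2_sum: "red2 (sum f S) = sum (\<lambda>i. red2 (f i)) S"
  by (induct S rule: infinite_finite_induct) (auto simp: red2_add)

lemma of_int_rep4: "of_int (Rep_bit0 a) = (a::4)"
  using z4_cases[of a] by (auto simp: Ls)

lemma rep4_add_sq: "(Rep_bit0 (a + b::4))^2 mod 8 = (Rep_bit0 a + Rep_bit0 b)^2 mod 8"
  using z4_cases[of a] z4_cases[of b] by (auto simp: Ls)

lemma of_int_eq_0_4: "(of_int z :: 4) = 0 \<longleftrightarrow> 4 dvd z"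
  by (metis bit0.Rep_inject_sym L0 rep4_of_int dvd_eq_mod_eq_0)
lemma of_int_eq_0_2: "(of_int z :: 2) = 0 \<longleftrightarrow> even z"
  by (metis bit0.Rep_inject_sym bit0.Rep_0 rep2_of_int even_iff_mod_2_eq_zero)
lemma of_int_2: "(of_int z :: 2) = (if odd z then 1 else 0)"
  using of_int_eq_0_2[of z] z2_cases[of "of_int z"] by auto
lemma of_nat_eq_0_2: "(of_nat n :: 2) = 0 \<longleftrightarrow> even n"
  using of_int_eq_0_2[of "int n"] by simp
lemma red2_of_int: "red2 (of_int z) = of_int z"
proof -
  have "Rep_bit0 (of_int z :: 4) = z mod 4" by (rule rep4_of_int)
  have "z mod 4 = 0 \<or> z mod 4 = 1 \<or> z mod 4 = 2 \<or> z mod 4 = 3" by auto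
  moreover have "(of_int z :: 4) = of_int (z mod 4)"
    by (metis of_int_rep4 rep4_of_int)
  moreover have "(of_int z :: 2) = of_int (z mod 2)"
    by (metis of_int_2 even_mod_2_iff)
  moreover have "z mod 2 = (z mod 4) mod 2" by (simp add: mod_mod_cancel)
  ultimately show ?thesis by (auto simp: red2_def)
qed

definition red :: "4^'n::finite \<Rightarrow> 2^'n" where "red x = (\<chi> i. red2 (x$i))"
definition binner :: "2^'n::finite \<Rightarrow> 2^'n \<Rightarrow> 2" where "binner u v = (\<Sum>i\<in>UNIV. u$i * v$i)"
definition bwt :: "2^'n::finite \<Rightarrow> nat" where "bwt r = card {i. r$i = 1}"
definition Q :: "4^'n::finite \<Rightarrow> int" where "Q x = (\<Sum>i\<in>UNIV. (Rep_bit0 (x$i))^2)"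

lemma red_add: "red (x + y) = red x + red y"
  by (simp add: red_def vec_eq_iff red2_add)
lemma red_diff: "red (x - y) = red x + red y"
  by (simp add: red_def vec_eq_iff red2_diff)
lemma red_scale: "red (c *s x) = red2 c *s red x"
  by (simp add: red_def vec_eq_iff red2_mult)
lemma red_zero[simp]: "red 0 = 0"
  by (simp add: red_def vec_eq_iff)
lemma red_sum: "red (sum f S) = sum (\<lambda>j. red (f j)) S"
  by (induct S rule: infinite_finite_induct) (auto simp: red_add)
lemma red2_2[simp]: "red2 2 = 0" by (simp add: red2_def)
lemma red_two: "red (2 *s x) = 0"
  by (simp add: red_def vec_eq_iff red2_mult)

lemma inner_comm: "z4_inner x y = z4_inner y x"
  by (simp add: z4_inner_def mult.commute)
lemma inner_add_right: "z4_inner x (y + z) = z4_inner x y + z4_inner x z"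
  by (simp add: z4_inner_def distrib_left sum.distrib)
lemma inner_add_left: "z4_inner (y + z) x = z4_inner y x + z4_inner z x"
  by (simp add: z4_inner_def distrib_right sum.distrib)
lemma inner_scale_right: "z4_inner x (c *s y) = c * z4_inner x y"
  by (simp add: z4_inner_def sum_distrib_left algebra_simps)
lemma inner_scale_left: "z4_inner (c *s x) y = c * z4_inner x y"
  by (simp add: z4_inner_def sum_distrib_left algebra_simps)
lemma inner_zero_right[simp]: "z4_inner x 0 = 0"
  by (simp add: z4_inner_def)
lemma inner_zero_left[simp]: "z4_inner 0 x = 0"
  by (simp add: z4_inner_def)
lemma inner_sum_right: "z4_inner x (sum f S) = sum (\<lambda>j. z4_inner x (f j)) S"
  by (induct S rule: infinite_finite_induct) (auto simp: inner_add_right)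
lemma inner_sum_left: "z4_inner (sum f S) x = sum (\<lambda>j. z4_inner (f j) x) S"
  by (induct S rule: infinite_finite_induct) (auto simp: inner_add_left)

lemma red2_inner: "red2 (z4_inner x y) = binner (red x) (red y)"
  by (simp add: z4_inner_def binner_def red2_sum red2_mult red_def)

lemma two_inner_0: "2 * z4_inner x y = 0 \<longleftrightarrow> binner (red x) (red y) = 0"
  by (simp add: two_mult_0 red2_inner)

lemma inner_two_right: "z4_inner x (2 *s y) = 2 * z4_inner x y"
  by (rule inner_scale_right)

lemma binner_comm: "binner u v = binner v u"
  by (simp add: binner_def mult.commute)
lemma binner_add_right: "binner x (y + z) = binner x y + binner x z"
  by (simp add: binner_def distrib_left sum.distrib)
lemma binner_add_left: "binner (y + z) x = binner y x + binner z x"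
  by (simp add: binner_def distrib_right sum.distrib)
lemma binner_scale_right: "binner x (c *s y) = c * binner x y"
  by (simp add: binner_def sum_distrib_left algebra_simps)
lemma binner_scale_left: "binner (c *s x) y = c * binner x y"
  by (simp add: binner_def sum_distrib_left algebra_simps)
lemma binner_zero_right[simp]: "binner x 0 = 0" by (simp add: binner_def)
lemma binner_zero_left[simp]: "binner 0 x = 0" by (simp add: binner_def)
lemma binner_sum_right: "binner x (sum f S) = sum (\<lambda>j. binner x (f j)) S"
  by (induct S rule: infinite_finite_induct) (auto simp: binner_add_right)
lemma binner_sum_left: "binner (sum f S) x = sum (\<lambda>j. binner (f j) x) S"
  by (induct S rule: infinite_finite_induct) (auto simp: binner_add_left)

definition upv :: "2^'n::finite \<Rightarrow> 4^'n" where "upv v = (\<chi> i. up (v$i))"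
lemma red_upv[simp]: "red (upv v) = v"
  by (simp add: red_def upv_def vec_eq_iff)

definition halfv :: "4^'n::finite \<Rightarrow> 4^'n" where "halfv x = (\<chi> i. half (x$i))"
lemma halfv: "red x = 0 \<Longrightarrow> x = 2 *s halfv x"
  by (auto simp: red_def halfv_def vec_eq_iff intro: half)

lemma red_halfv: "red (halfv x) = (\<chi> i. if x$i = 2 then 1 else 0)"
  by (simp add: red_def halfv_def vec_eq_iff red2_half)

lemma sum_binary: "(\<Sum>i\<in>UNIV. (v::2^'n::finite)$i) = of_nat (bwt v)"
proof -
  have "(\<Sum>i\<in>UNIV. v$i) = (\<Sum>i\<in>UNIV. if v$i = 1 then 1 else 0)"
    by (rule sum.cong) (use z2_cases in auto)
  also have "\<dots> = of_nat (card {i. v$i = 1})"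
    by (simp add: sum.If_cases)
  finally show ?thesis by (simp add: bwt_def)
qed

lemma binner_ones: "binner v (\<chi> i. 1) = of_nat (bwt v)"
  by (simp add: binner_def sum_binary)

lemma bwt_zero_iff: "bwt v = 0 \<longleftrightarrow> v = 0"
proof
  assume "bwt v = 0"
  then have "{i. v$i = 1} = {}" by (simp add: bwt_def)
  then show "v = 0" using z2_cases by (auto simp: vec_eq_iff)
qed (simp add: bwt_def)

lemma Q_eucl: "Q x = int (eucl_weight x) + 8 * int (card {i. x$i = 3})"
proof -
  have pt: "(Rep_bit0 (x$i))^2 = (if x$i = 1 then 1 else 0) + 4 * (if x$i = 2 then 1 else 0)
      + (if x$i = 3 then 1 else 0) + 8 * (if x$i = 3 then 1 else 0)" for i
    using z4_cases[of "x$i"] by (auto simp: Ls)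
  have "Q x = (\<Sum>i\<in>UNIV. (if x$i = 1 then 1 else 0) + 4 * (if x$i = 2 then 1 else 0)
      + (if x$i = 3 then 1 else 0) + 8 * (if x$i = 3 then (1::int) else 0))"
    unfolding Q_def by (rule sum.cong) (auto simp only: pt)
  also have "\<dots> = int (card {i. x$i = 1}) + 4 * int (card {i. x$i = 2}) + int (card {i. x$i = 3})
      + 8 * int (card {i. x$i = 3})"
    by (simp add: sum.distrib sum.If_cases sum_distrib_left[symmetric])
  finally show ?thesis by (simp add: eucl_weight_def)
qed

lemma Q_add: "z4_inner x y = 0 \<Longrightarrow> Q (x + y) mod 8 = (Q x + Q y) mod 8"
proof -
  assume h: "z4_inner x y = 0"
  define B where "B = (\<Sum>i\<in>UNIV. Rep_bit0 (x$i) * Rep_bit0 (y$i))"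
  have "of_int B = z4_inner x y"
    by (simp add: B_def z4_inner_def of_int_rep4)
  then have "4 dvd B" using h of_int_eq_0_4 by metis
  have "Q (x + y) mod 8 = (\<Sum>i\<in>UNIV. (Rep_bit0 (x$i + y$i))^2 mod 8) mod 8"
    by (simp add: Q_def mod_sum_eq)
  also have "\<dots> = (\<Sum>i\<in>UNIV. (Rep_bit0 (x$i) + Rep_bit0 (y$i))^2 mod 8) mod 8"
    by (simp add: rep4_add_sq)
  also have "\<dots> = (\<Sum>i\<in>UNIV. (Rep_bit0 (x$i) + Rep_bit0 (y$i))^2) mod 8"
    by (simp add: mod_sum_eq)
  also have "(\<Sum>i\<in>UNIV. (Rep_bit0 (x$i) + Rep_bit0 (y$i))^2) = Q x + Q y + 2 * B"
    by (simp add: Q_def B_def power2_sum sum.distrib sum_distrib_left mult.assoc)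
  finally have e: "Q (x + y) mod 8 = (Q x + Q y + 2 * B) mod 8" .
  from \<open>4 dvd B\<close> obtain k where "B = 4 * k" by (auto elim!: dvdE)
  then have "Q x + Q y + 2 * B = (Q x + Q y) + k * 8" by simp
  then show ?thesis using e by (metis mod_mult_self1)
qed

lemma Q_two: "Q (2 *s upv v) = 4 * int (bwt v)"
proof -
  have pt: "(Rep_bit0 (2 * upv v $ i))^2 = 4 * (if v$i = 1 then 1 else 0)" for i
    using z2_cases[of "v$i"] by (auto simp: upv_def up_def Ls)
  show ?thesis
    by (simp add: Q_def pt sum_distrib_left[symmetric] sum.If_cases bwt_def)
qed

lemma eucl_ge_bwt: "bwt (red x) \<le> eucl_weight x"
proof -
  have "{i. red x $ i = 1} = {i. x$i = 1} \<union> {i. x$i = 3}"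
    by (auto simp: red_def red2_1_iff)
  then have "bwt (red x) \<le> card {i. x$i = 1} + card {i. x$i = 3}"
    by (simp add: bwt_def card_Un_le)
  then show ?thesis by (simp add: eucl_weight_def)
qed

lemma eucl_two: "eucl_weight (2 *s upv v) = 4 * bwt v"
proof -
  have "eucl_weight (2 *s upv v) = nat (Q (2 *s upv v))"
  proof -
    have "{i. (2 *s upv v)$i = (3::4)} = {}"
      using z2_cases by (auto simp: upv_def up_def)
    then show ?thesis by (simp add: Q_eucl)
  qed
  then show ?thesis by (simp add: Q_two)
qed

lemma z2_add_self: "(a::2) + a = 0"
  using z2_cases[of a] by auto
lemma two_2[simp]: "(2::2) = 0" by simp
lemma vec2_add_self: "(r::2^'n::finite) + r = 0"
  by (simp add: vec_eq_iff)
lemma z2_add_eq_0: "(a::2) + b = 0 \<longleftrightarrow> a = b"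
  using z2_cases[of a] z2_cases[of b] by auto

definition ev :: "'n::finite \<Rightarrow> 2^'n" where "ev a = (\<chi> i. if i = a then 1 else 0)"
lemma binner_ev: "binner (ev a) r = r $ a"
proof -
  have "binner (ev a) r = (\<Sum>i\<in>UNIV. if i = a then r $ i else 0)"
    unfolding binner_def ev_def by (rule sum.cong) auto
  then show ?thesis by simp
qed

lemma binner_support: "binner v r = sum (\<lambda>i. r$i) {i. v$i = 1}"
proof -
  have "binner v r = (\<Sum>i\<in>UNIV. if v$i = 1 then r$i else 0)"
    unfolding binner_def
  proof (rule sum.cong)
    fix i show "v $ i * r $ i = (if v $ i = 1 then r $ i else 0)" using z2_cases[of "v$i"] by auto
  qed simp
  then show ?thesis by (simp add: sum.If_cases)
qed

locale zcode =
  fixes g :: "nat \<Rightarrow> 4^'n::finite" and k :: nat and p :: "nat \<Rightarrow> 'n"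
  assumes orth: "\<And>j m. j < k \<Longrightarrow> m < k \<Longrightarrow> z4_inner (g j) (g m) = 0"
  and q8: "\<And>j. j < k \<Longrightarrow> 8 dvd Q (g j)"
  and piv: "\<And>j m. j < k \<Longrightarrow> m < k \<Longrightarrow> red (g j) $ p m = (if j = m then 1 else 0)"
  and ones: "\<exists>b. (\<chi> i. 1) = (\<Sum>j<k. b j *s red (g j))"
  and wt16: "\<And>b. (\<Sum>j<k. b j *s red (g j)) = 0 \<or> 16 \<le> bwt (\<Sum>j<k. b j *s red (g j))"
  and cols: "\<And>a c. a \<noteq> c \<Longrightarrow> \<exists>j<k. red (g j) $ a \<noteq> red (g j) $ c"
  and attain: "\<exists>j<k. eucl_weight (g j) = 16"
begin

definition "rb j = red (g j)"
definition "lc b = (\<Sum>j<k. b j *s rb j)"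
definition "RR = range lc"
definition "perp = {v. \<forall>m<k. binner v (rb m) = 0}"
definition "CC = {x. red x \<in> RR \<and> (\<forall>j<k. z4_inner x (g j) = 0)}"
definition "lift b = (\<Sum>j<k. up (b j) *s g j)"

lemma lc_add: "lc b + lc c = lc (\<lambda>j. b j + c j)"
  by (simp add: lc_def sum.distrib[symmetric] vector_sadd_rdistrib)
lemma lc_scale: "a *s lc b = lc (\<lambda>j. a * b j)"
  by (simp add: lc_def vec_eq_iff sum_distrib_left mult.assoc)
lemma lc_zero: "lc (\<lambda>j. 0) = 0"
  by (simp add: lc_def)
lemma RR_add: "r \<in> RR \<Longrightarrow> s \<in> RR \<Longrightarrow> r + s \<in> RR"
  by (auto simp: RR_def lc_add)
lemma RR_scale: "r \<in> RR \<Longrightarrow> a *s r \<in> RR"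
  by (auto simp: RR_def lc_scale)
lemma RR_zero: "0 \<in> RR"
  using lc_zero unfolding RR_def by (metis rangeI)

lemma perp_binner: assumes "r \<in> RR" "v \<in> perp" shows "binner r v = 0"
proof -
  obtain b where r: "r = lc b" using assms(1) by (auto simp: RR_def)
  have "binner r v = (\<Sum>j<k. b j * binner (rb j) v)"
    by (simp add: r lc_def binner_sum_left binner_scale_left)
  also have "\<dots> = 0" using assms(2) by (simp add: perp_def binner_comm[of _ v])
  finally show ?thesis .
qed

lemma red_lift: "red (lift b) = lc b"
  by (simp add: lift_def lc_def red_sum red_scale rb_def)

lemma inner_lift: "z4_inner x (lift b) = (\<Sum>j<k. up (b j) * z4_inner x (g j))"
  by (simp add: lift_def inner_sum_right inner_scale_right)

lemma lift_in: "lift b \<in> CC"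
proof -
  have "z4_inner (lift b) (g m) = 0" if "m < k" for m
    using that by (simp add: inner_comm[of "lift b"] inner_lift inner_comm[of "g m"] orth)
  then show ?thesis by (auto simp: CC_def red_lift RR_def)
qed

lemma g_in: "j < k \<Longrightarrow> g j \<in> CC"
proof -
  assume j: "j < k"
  have "lift (\<lambda>m. if m = j then 1 else 0) = (\<Sum>m<k. if m = j then g m else 0)"
    unfolding lift_def by (rule sum.cong) (auto simp: up_def)
  also have "\<dots> = g j" using j by simp
  finally have "lift (\<lambda>m. if m = j then 1 else 0) = g j" .
  then show ?thesis using lift_in by metis
qed

lemma two_in: "v \<in> perp \<Longrightarrow> 2 *s upv v \<in> CC"
proof -
  assume v: "v \<in> perp"
  have "z4_inner (2 *s upv v) (g m) = 0" if "m < k" for m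
    using v that by (simp add: inner_scale_left two_inner_0 perp_def rb_def)
  then show ?thesis by (auto simp: CC_def red_two RR_zero)
qed

lemma decomp: assumes x: "x \<in> CC" shows "\<exists>b v. v \<in> perp \<and> x = lift b + 2 *s upv v"
proof -
  from x obtain b where b: "red x = lc b" by (auto simp: CC_def RR_def)
  define y where "y = lift b"
  have "red (x - y) = 0" by (simp add: red_diff y_def red_lift b vec2_add_self)
  then have xy: "x - y = 2 *s halfv (x - y)" by (rule halfv)
  define v where "v = red (halfv (x - y))"
  have uh: "upv v = halfv (x - y)"
    by (simp add: v_def upv_def halfv_def red_def vec_eq_iff half_def up_def)
  have xe: "x = y + 2 *s upv v" using xy uh by (metis add_diff_cancel_left' diff_add_cancel add.commute)
  have "v \<in> perp"
  proof -
    have "binner v (rb m) = 0" if m: "m < k" for m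
    proof -
      have "z4_inner x (g m) = 0" using x m by (simp add: CC_def)
      moreover have "z4_inner y (g m) = 0" using lift_in m by (simp add: CC_def y_def)
      ultimately have "z4_inner (2 *s upv v) (g m) = 0" using xe by (simp add: inner_add_left)
      then show ?thesis by (simp add: inner_scale_left two_inner_0 rb_def)
    qed
    then show ?thesis by (simp add: perp_def)
  qed
  then show ?thesis using xe y_def by blast
qed

lemma CC_orth: assumes x: "x \<in> CC" and y: "y \<in> CC" shows "z4_inner x y = 0"
proof -
  obtain b v where v: "v \<in> perp" and ye: "y = lift b + 2 *s upv v" using decomp[OF y] by blast
  have "z4_inner x (lift b) = 0" using x by (simp add: inner_lift CC_def)
  moreover have "red x \<in> RR" using x by (simp add: CC_def)
  then have "binner (red x) v = 0" using v perp_binner by blast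
  then have "z4_inner x (2 *s upv v) = 0" by (simp add: inner_scale_right two_inner_0)
  ultimately show ?thesis using ye by (simp add: inner_add_right)
qed

lemma z4code: "z4_code CC"
  unfolding z4_code_def
proof (intro conjI ballI allI)
  show "0 \<in> CC" by (simp add: CC_def RR_zero)
next
  fix x y assume "x \<in> CC" "y \<in> CC"
  then show "x + y \<in> CC" by (auto simp: CC_def red_add RR_add inner_add_left)
next
  fix c :: 4 and x assume "x \<in> CC"
  then show "c *s x \<in> CC" by (auto simp: CC_def red_scale RR_scale inner_scale_left)
qed

lemma perp_perp: assumes u: "\<forall>v\<in>perp. binner u v = 0" shows "u \<in> RR"
proof -
  define b where "b m = u $ p m" for m
  define u' where "u' = u + lc b"
  have lcp: "lc c $ p m = c m" if "m < k" for c m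
  proof -
    have "lc c $ p m = (\<Sum>j<k. c j * rb j $ p m)" by (simp add: lc_def sum_component)
    also have "\<dots> = (\<Sum>j<k. if j = m then c j else 0)"
      by (rule sum.cong) (auto simp: rb_def piv that)
    finally show ?thesis using that by simp
  qed
  have u'p: "u' $ p j = 0" if "j < k" for j
    using that by (simp add: u'_def lcp b_def z2_add_self)
  have "u' $ q = 0" for q
  proof -
    define vq where "vq = ev q + (\<Sum>j<k. (rb j $ q) *s ev (p j))"
    have "binner vq (rb m) = 0" if m: "m < k" for m
    proof -
      have "binner vq (rb m) = rb m $ q + (\<Sum>j<k. rb j $ q * rb m $ p j)"
        by (simp add: vq_def binner_add_left binner_sum_left binner_scale_left binner_ev)
      also have "(\<Sum>j<k. rb j $ q * rb m $ p j) = (\<Sum>j<k. if j = m then rb m $ q else 0)"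
        by (rule sum.cong) (auto simp: rb_def piv m)
      finally show ?thesis using m by (simp add: z2_add_self)
    qed
    then have vq: "vq \<in> perp" by (simp add: perp_def)
    have "binner u vq = 0" using u vq by blast
    moreover have "binner (lc b) vq = 0" using perp_binner[OF _ vq] by (simp add: RR_def)
    ultimately have "binner u' vq = 0" by (simp add: u'_def binner_add_left)
    moreover have "binner u' vq = u' $ q + (\<Sum>j<k. rb j $ q * u' $ p j)"
      by (simp add: vq_def binner_add_right binner_sum_right binner_scale_right binner_comm[of u'] binner_ev)
    ultimately show ?thesis by (simp add: u'p)
  qed
  then have "u' = 0" by (simp add: vec_eq_iff)
  then have "u = lc b" unfolding u'_def by (metis add_diff_cancel_right' diff_0 vec2_add_self add.commute add_0 add.assoc)
  then show ?thesis by (simp add: RR_def)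
qed

lemma self_dual: "self_dual CC"
  unfolding self_dual_def
proof (intro conjI z4code)
  show "CC = z4_dual CC"
  proof
    show "CC \<subseteq> z4_dual CC" using CC_orth by (auto simp: z4_dual_def)
  next
    show "z4_dual CC \<subseteq> CC"
    proof
      fix x assume x: "x \<in> z4_dual CC"
      then have xo: "\<And>y. y \<in> CC \<Longrightarrow> z4_inner x y = 0" by (simp add: z4_dual_def)
      have "\<forall>v\<in>perp. binner (red x) v = 0"
      proof
        fix v assume "v \<in> perp"
        then have "z4_inner x (2 *s upv v) = 0" using xo two_in by blast
        then show "binner (red x) v = 0" by (simp add: inner_scale_right two_inner_0)
      qed
      then have "red x \<in> RR" by (rule perp_perp)
      moreover have "\<forall>j<k. z4_inner x (g j) = 0" using xo g_in by blast
      ultimately show "x \<in> CC" by (simp add: CC_def)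
    qed
  qed
qed

lemma perp_even: "v \<in> perp \<Longrightarrow> even (bwt v)"
proof -
  assume v: "v \<in> perp"
  obtain b where "(\<chi> i. 1) = lc b" using ones by (auto simp: lc_def rb_def)
  then have "(\<chi> i. 1) \<in> RR" by (simp add: RR_def)
  then have "binner (\<chi> i. 1) v = 0" using perp_binner v by blast
  then have "(of_nat (bwt v) :: 2) = 0" by (simp add: binner_comm[of "\<chi> i. 1"] binner_ones)
  then show ?thesis by (simp add: of_nat_eq_0_2)
qed

lemma Q_partial: "n \<le> k \<Longrightarrow> (\<Sum>j<n. up (b j) *s g j) \<in> CC \<and> Q (\<Sum>j<n. up (b j) *s g j) mod 8 = 0"
proof (induct n)
  case 0
  then show ?case by (simp add: CC_def RR_zero Q_def Ls)
next
  case (Suc n)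
  define s where "s = (\<Sum>j<n. up (b j) *s g j)"
  have s: "s \<in> CC" "Q s mod 8 = 0" using Suc by (auto simp: s_def)
  have t: "up (b n) *s g n \<in> CC" using z4code g_in Suc by (auto simp: z4_code_def)
  have qt: "Q (up (b n) *s g n) mod 8 = 0"
    using q8[of n] Suc z2_cases[of "b n"] by (auto simp: up_def Q_def Ls)
  have "s + up (b n) *s g n \<in> CC" using s t z4code by (auto simp: z4_code_def)
  moreover have "Q (s + up (b n) *s g n) mod 8 = 0"
    using Q_add[OF CC_orth[OF s(1) t]] s qt by (simp add: mod_add_eq[symmetric])
  ultimately show ?case by (simp add: s_def)
qed

lemma typeII: "type_II CC"
  unfolding type_II_def
proof (intro conjI self_dual ballI)
  fix x assume x: "x \<in> CC"
  obtain b v where v: "v \<in> perp" and xe: "x = lift b + 2 *s upv v" using decomp[OF x] by blast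
  have l: "Q (lift b) mod 8 = 0" using Q_partial[of k b] by (simp add: lift_def)
  have "Q x mod 8 = (Q (lift b) + Q (2 *s upv v)) mod 8"
    using Q_add[OF CC_orth[OF lift_in two_in[OF v]]] xe by simp
  also have "\<dots> = 0" using l perp_even[OF v] by (auto simp: Q_two mod_add_eq[symmetric] elim!: evenE)
  finally have "Q x mod 8 = 0" .
  then show "8 dvd eucl_weight x" using Q_eucl[of x] by presburger
qed

lemma minw: assumes x: "x \<in> CC" and nz: "x \<noteq> 0" shows "16 \<le> eucl_weight x"
proof (cases "red x = 0")
  case False
  from x obtain b where b: "red x = lc b" by (auto simp: CC_def RR_def)
  then have "16 \<le> bwt (red x)" using wt16[of b] False by (simp add: lc_def rb_def)
  then show ?thesis using eucl_ge_bwt[of x] by simp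
next
  case True
  have xh: "x = 2 *s halfv x" using halfv[OF True] .
  define v where "v = red (halfv x)"
  have uh: "upv v = halfv x"
    by (simp add: v_def upv_def halfv_def red_def vec_eq_iff half_def up_def)
  have vp: "v \<in> perp"
  proof -
    have "binner v (rb m) = 0" if m: "m < k" for m
    proof -
      have "z4_inner x (g m) = 0" using x m by (simp add: CC_def)
      then have "z4_inner (2 *s upv v) (g m) = 0" using xh uh by simp
      then show ?thesis by (simp add: inner_scale_left two_inner_0 rb_def)
    qed
    then show ?thesis by (simp add: perp_def)
  qed
  have xe: "x = 2 *s upv v" using xh uh by simp
  have "upv 0 = 0" by (simp add: upv_def up_def vec_eq_iff)
  then have "v \<noteq> 0" using nz xe by (metis vector_smult_rzero)
  then have b0: "bwt v \<noteq> 0" by (simp add: bwt_zero_iff)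
  have b2: "bwt v \<noteq> 2"
  proof
    assume "bwt v = 2"
    then obtain a c where ac: "{i. v$i = 1} = {a, c}" "a \<noteq> c" by (auto simp: bwt_def card_2_iff)
    obtain j where j: "j < k" "red (g j) $ a \<noteq> red (g j) $ c" using cols[OF ac(2)] by blast
    have "binner v (rb j) = 0" using vp j by (simp add: perp_def)
    then have "rb j $ a + rb j $ c = 0" using ac by (simp add: binner_support)
    then show False using j by (simp add: z2_add_eq_0 rb_def)
  qed
  have "4 \<le> bwt v" using b0 b2 perp_even[OF vp] by presburger
  then show ?thesis using xe eucl_two[of v] by simp
qed

lemma min16: "min_eucl_weight CC = 16"
proof -
  obtain j where j: "j < k" "eucl_weight (g j) = 16" using attain by blast
  have "g j \<noteq> 0" using j(2) by (auto simp: eucl_weight_def)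
  then have "16 \<in> eucl_weight ` (CC - {0})" using g_in[OF j(1)] j(2) by (metis DiffI empty_iff image_eqI insert_iff)
  moreover have "\<forall>y\<in>eucl_weight ` (CC - {0}). 16 \<le> y" using minw by auto
  ultimately show ?thesis unfolding min_eucl_weight_def by (intro Min_eqI) auto
qed

lemma residue_eq: "residue CC = RR"
proof
  show "residue CC \<subseteq> RR" by (auto simp: residue_def CC_def red_def[symmetric])
next
  show "RR \<subseteq> residue CC"
  proof
    fix r assume "r \<in> RR"
    then obtain b where "r = lc b" by (auto simp: RR_def)
    then have "r = red (lift b)" by (simp add: red_lift)
    then show "r \<in> residue CC" using lift_in by (auto simp: residue_def red_def)
  qed
qed

lemma card_RR: "card RR = 2 ^ k"
proof -
  have lcp: "lc c $ p m = c m" if "m < k" for c m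
  proof -
    have "lc c $ p m = (\<Sum>j<k. c j * rb j $ p m)" by (simp add: lc_def sum_component)
    also have "\<dots> = (\<Sum>j<k. if j = m then c j else 0)"
      by (rule sum.cong) (auto simp: rb_def piv that)
    finally show ?thesis using that by simp
  qed
  have "RR = lc ` (PiE {..<k} (\<lambda>_. UNIV))"
  proof
    show "RR \<subseteq> lc ` (PiE {..<k} (\<lambda>_. UNIV))"
    proof
      fix r assume "r \<in> RR"
      then obtain b where r: "r = lc b" by (auto simp: RR_def)
      have "lc b = lc (restrict b {..<k})" by (simp add: lc_def)
      then show "r \<in> lc ` (PiE {..<k} (\<lambda>_. UNIV))" using r by auto
    qed
  qed (auto simp: RR_def)
  moreover have "inj_on lc (PiE {..<k} (\<lambda>_. UNIV))"
  proof (rule inj_onI)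
    fix b c assume b: "b \<in> PiE {..<k} (\<lambda>_. UNIV)" and c: "c \<in> PiE {..<k} (\<lambda>_. UNIV)" and e: "lc b = lc c"
    have bc: "b m = c m" if "m < k" for m using lcp[of m b] lcp[of m c] e that by simp
    show "b = c" by (rule PiE_ext[OF b c]) (simp add: bc)
  qed
  ultimately have "card RR = card (PiE {..<k} (\<lambda>_. UNIV :: 2 set))" by (simp add: card_image)
  also have "\<dots> = 2 ^ k" by (simp add: card_PiE)
  finally show ?thesis .
qed

lemma dim: "binary_dim (residue CC) = k"
  unfolding binary_dim_def residue_eq card_RR
  by (rule the_equality) (auto simp: power_inject_exp)

lemma extremal: "CARD('n) = 40 \<Longrightarrow> extremal_type_II CC"
  by (simp add: extremal_type_II_def typeII min16)

end

definition permv :: "('n::finite \<Rightarrow> 'n) \<Rightarrow> 2^'n \<Rightarrow> 2^'n" where "permv \<sigma> r = (\<chi> i. r $ \<sigma> i)"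
definition Pprop :: "(2^'n::finite) set \<Rightarrow> bool" where
 "Pprop R \<longleftrightarrow> (\<exists>u\<in>R. \<exists>v\<in>R. \<exists>w\<in>R. bwt u = 16 \<and> bwt v = 16 \<and> bwt w = 16 \<and>
    bwt (u+v) = 16 \<and> bwt (u+w) = 16 \<and> v \<noteq> w \<and> w \<noteq> u + v)"

lemma residue_equiv: assumes "z4_equivalent C D" shows "\<exists>\<sigma>. bij \<sigma> \<and> residue D = permv \<sigma> ` residue C"
proof -
  from assms obtain \<sigma> s where b: "bij \<sigma>" and s: "\<forall>i. s i = (1::4) \<or> s i = -1"
    and D: "D = (\<lambda>x. \<chi> i. s i * x $ \<sigma> i) ` C" by (auto simp: z4_equivalent_def)
  have rs: "red2 (s i) = 1" for i using s[rule_format, of i] by auto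
  have "residue D = (\<lambda>x. \<chi> i. red2 (x $ \<sigma> i)) ` C"
    by (simp add: residue_def D image_image red2_mult rs)
  also have "\<dots> = permv \<sigma> ` residue C"
    by (simp add: residue_def permv_def image_image)
  finally show ?thesis using b by blast
qed

lemma bwt_perm: assumes "bij \<sigma>" shows "bwt (permv \<sigma> r) = bwt r"
proof -
  have "\<sigma> ` {i. r $ \<sigma> i = 1} = {j. r $ j = 1}"
    using assms by (auto simp: bij_def)
  moreover have "inj \<sigma>" using assms by (simp add: bij_def)
  ultimately have "card {i. r $ \<sigma> i = 1} = card {j. r $ j = 1}"
    by (metis card_image inj_on_subset subset_UNIV)
  then show ?thesis by (simp add: bwt_def permv_def)
qed

lemma permv_add: "permv \<sigma> (u + v) = permv \<sigma> u + permv \<sigma> v"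
  by (simp add: permv_def vec_eq_iff)

lemma permv_inj: assumes "bij \<sigma>" shows "permv \<sigma> v = permv \<sigma> w \<longleftrightarrow> v = w"
proof
  assume e: "permv \<sigma> v = permv \<sigma> w"
  show "v = w" unfolding vec_eq_iff
  proof
    fix j
    obtain i where "j = \<sigma> i" using assms by (metis bij_def surj_def)
    then show "v $ j = w $ j" using e by (simp add: permv_def vec_eq_iff)
  qed
qed simp

lemma Pprop_perm: assumes b: "bij \<sigma>" and P: "Pprop R" shows "Pprop (permv \<sigma> ` R)"
proof -
  from P obtain u v w where uvw: "u \<in> R" "v \<in> R" "w \<in> R" "bwt u = 16" "bwt v = 16" "bwt w = 16"
    "bwt (u+v) = 16" "bwt (u+w) = 16" "v \<noteq> w" "w \<noteq> u + v" unfolding Pprop_def by blast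
  show ?thesis unfolding Pprop_def
    apply (rule bexI[of _ "permv \<sigma> u"], rule bexI[of _ "permv \<sigma> v"], rule bexI[of _ "permv \<sigma> w"])
    using uvw by (simp_all add: bwt_perm[OF b] permv_add[symmetric] permv_inj[OF b])
qed

lemma not_equiv: assumes "Pprop (residue C)" and "\<not> Pprop (residue D)" shows "\<not> z4_equivalent C D"
  using assms residue_equiv Pprop_perm by metis

definition ix :: "40 \<Rightarrow> nat" where "ix i = nat (Rep_bit0 i)"

lemma ix_lt: "ix i < 40"
  using Rep_bit0[of i] by (auto simp: ix_def)

lemma ix_of_nat: "m < 40 \<Longrightarrow> ix (of_nat m) = m"
  using bit0.Rep_Abs_mod[of "int m", where 'a="20"] by (simp add: ix_def bit0.of_nat_eq)

lemma ix_inj: "inj ix"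
proof (rule injI)
  fix a b assume "ix a = ix b"
  then have "Rep_bit0 a = Rep_bit0 b" using Rep_bit0[of a] Rep_bit0[of b] by (simp add: ix_def eq_nat_nat_iff)
  then show "a = b" by (simp add: Rep_bit0_inject)
qed

lemma ix_bij: "bij_betw ix UNIV {..<40}"
  unfolding bij_betw_def
proof
  show "inj_on ix UNIV" using ix_inj by simp
  show "range ix = {..<40}"
  proof
    show "range ix \<subseteq> {..<40}" using ix_lt by auto
    show "{..<40} \<subseteq> range ix"
    proof
      fix t assume "t \<in> {..<40::nat}"
      then have "ix (of_nat t) = t" by (simp add: ix_of_nat)
      then show "t \<in> range ix" by (metis rangeI)
    qed
  qed
qed

lemma upt_ix[simp]: "[0..<40] ! ix i = ix i" using ix_lt[of i] by simp

lemma sum_ix: "(\<Sum>i\<in>UNIV. f (ix i)) = (\<Sum>t<40. f t)"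
  using sum.reindex_bij_betw[OF ix_bij, of f] by simp

lemma card_ix: "card {i. P (ix i)} = length (filter P [0..<40])"
proof -
  have "ix ` {i. P (ix i)} = {t. t < 40 \<and> P t}"
  proof
    show "ix ` {i. P (ix i)} \<subseteq> {t. t < 40 \<and> P t}" using ix_lt by auto
    show "{t. t < 40 \<and> P t} \<subseteq> ix ` {i. P (ix i)}"
    proof
      fix t assume t: "t \<in> {t. t < 40 \<and> P t}"
      then have "ix (of_nat t) = t" by (simp add: ix_of_nat)
      then show "t \<in> ix ` {i. P (ix i)}" using t by (metis (mono_tags) image_eqI mem_Collect_eq)
    qed
  qed
  then have "card {i. P (ix i)} = card {t. t < 40 \<and> P t}"
    by (metis card_image inj_on_subset ix_inj subset_UNIV)
  also have "{t. t < 40 \<and> P t} = {t. t < 40 \<and> P ([0..<40] ! t)}" by auto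
  also have "card \<dots> = length (filter P [0..<40])"
    by (simp add: length_filter_conv_card)
  finally show ?thesis .
qed

lemma sum_upt_list: "(\<Sum>t<n. f t) = sum_list (map f [0..<n])"
  by (induct n) auto

definition gv :: "int list list \<Rightarrow> nat \<Rightarrow> 4^40" where "gv G j = (\<chi> i. of_int (G ! j ! ix i))"

lemma red_gv: "red (gv G j) = (\<chi> i. of_int (G ! j ! ix i))"
  by (simp add: red_def gv_def red2_of_int)

definition W :: "int list list \<Rightarrow> bool list \<Rightarrow> bool list" where
 "W G bs = map (\<lambda>t. odd (sum_list (map (\<lambda>j. if bs!j then G!j!t else 0) [0..<7]))) [0..<40]"
definition cnt :: "bool list \<Rightarrow> nat" where "cnt w = length (filter id w)"
definition allW :: "int list list \<Rightarrow> bool list list" where "allW G = map (W G) (List.n_lists 7 [False,True])"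
definition vecw :: "bool list \<Rightarrow> 2^40" where "vecw w = (\<chi> i. if w ! ix i then 1 else 0)"
definition bsof :: "(nat \<Rightarrow> 2) \<Rightarrow> bool list" where "bsof b = map (\<lambda>j. b j = 1) [0..<7]"
definition xorl :: "bool list \<Rightarrow> bool list \<Rightarrow> bool list" where "xorl a c = map2 (\<noteq>) a c"

lemma length_W[simp]: "length (W G bs) = 40" by (simp add: W_def)
lemma W_nth: "t < 40 \<Longrightarrow> W G bs ! t = odd (sum_list (map (\<lambda>j. if bs!j then G!j!t else 0) [0..<7]))"
  by (simp add: W_def cong: if_cong)

lemma bridge: "(\<Sum>j<7. b j *s red (gv G j)) = vecw (W G (bsof b))"
proof -
  have "(\<Sum>j<7. b j *s red (gv G j)) $ i = vecw (W G (bsof b)) $ i" for i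
  proof -
    have bj: "b j * of_int z = (of_int (if b j = 1 then z else 0) :: 2)" for j z
      using z2_cases[of "b j"] by auto
    have "(\<Sum>j<7. b j *s red (gv G j)) $ i = (\<Sum>j<7. b j * of_int (G ! j ! ix i))"
      by (simp add: sum_component red_gv)
    also have "\<dots> = of_int (\<Sum>j<7. if b j = 1 then G ! j ! ix i else 0)"
      by (simp add: bj)
    also have "(\<Sum>j<7. if b j = 1 then G ! j ! ix i else 0) =
        sum_list (map (\<lambda>j. if bsof b ! j then G!j!ix i else 0) [0..<7])"
      unfolding sum_upt_list by (rule arg_cong[where f=sum_list], rule map_cong) (auto simp: bsof_def)
    finally show ?thesis by (simp add: vecw_def W_nth[OF ix_lt] of_int_2)
  qed
  then show ?thesis by (simp add: vec_eq_iff)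
qed

lemma bwt_vecw: "length w = 40 \<Longrightarrow> bwt (vecw w) = cnt w"
proof -
  assume l: "length w = 40"
  have "bwt (vecw w) = card {i. w ! ix i}" by (simp add: bwt_def vecw_def)
  also have "\<dots> = length (filter (\<lambda>t. w ! t) [0..<40])" by (rule card_ix)
  also have "\<dots> = cnt w"
  proof -
    have "length (filter (\<lambda>t. w ! t) [0..<40]) = card {i. i < 40 \<and> w ! ([0..<40] ! i)}"
      by (simp only: length_filter_conv_card length_upt diff_zero)
    also have "{i. i < 40 \<and> w ! ([0..<40] ! i)} = {i. i < 40 \<and> w ! i}" by auto
    also have "card \<dots> = length (filter id w)"
      using l by (simp add: length_filter_conv_card)
    finally show ?thesis by (simp add: cnt_def)
  qed
  finally show ?thesis .
qed

lemma vecw_cnt0: assumes l: "length w = 40" and c: "cnt w = 0" shows "vecw w = 0"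
proof -
  have f: "filter id w = []" using c by (simp add: cnt_def)
  have "\<not> w ! ix i" for i
  proof -
    have "w ! ix i \<in> set w" using ix_lt[of i] l by (simp only: nth_mem)
    then show ?thesis using f by (auto simp only: filter_empty_conv id_def)
  qed
  then show ?thesis by (simp add: vecw_def vec_eq_iff)
qed

lemma vecw_add: assumes l: "length a = 40" "length c = 40" shows "vecw a + vecw c = vecw (xorl a c)"
proof -
  have x: "xorl a c ! ix i = (a ! ix i \<noteq> c ! ix i)" for i
    using ix_lt[of i] l by (simp add: xorl_def)
  show ?thesis unfolding vec_eq_iff
  proof
    fix i show "(vecw a + vecw c) $ i = vecw (xorl a c) $ i"
      by (cases "a ! ix i"; cases "c ! ix i") (simp_all add: vecw_def x)
  qed
qed

lemma vecw_inj: "length a = 40 \<Longrightarrow> length c = 40 \<Longrightarrow> vecw a = vecw c \<longleftrightarrow> a = c"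
proof
  assume l: "length a = 40" "length c = 40" and e: "vecw a = vecw c"
  show "a = c"
  proof (rule nth_equalityI)
    fix t assume "t < length a"
    then have t: "t < 40" using l by simp
    have "vecw a $ of_nat t = vecw c $ of_nat t" using e by simp
    then show "a ! t = c ! t" using t by (simp add: vecw_def ix_of_nat split: if_splits)
  qed (simp add: l)
qed simp

lemma set_allW: "set (allW G) = W G ` set (List.n_lists 7 [False,True])"
  by (simp only: allW_def set_map)

lemma bsof_in: "bsof b \<in> set (List.n_lists 7 [False,True])"
  by (simp only: set_n_lists) (auto simp add: bsof_def)

lemma range_lc: "range (\<lambda>b. \<Sum>j<7. b j *s red (gv G j)) = vecw ` set (allW G)"
proof
  show "range (\<lambda>b. \<Sum>j<7. b j *s red (gv G j)) \<subseteq> vecw ` set (allW G)"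
  proof
    fix r assume "r \<in> range (\<lambda>b. \<Sum>j<7. b j *s red (gv G j))"
    then obtain b where r: "r = (\<Sum>j<7. b j *s red (gv G j))" by blast
    have "W G (bsof b) \<in> set (allW G)" unfolding set_allW by (rule imageI[OF bsof_in])
    moreover have "r = vecw (W G (bsof b))" using r by (simp only: bridge)
    ultimately show "r \<in> vecw ` set (allW G)" by (rule rev_image_eqI)
  qed
next
  show "vecw ` set (allW G) \<subseteq> range (\<lambda>b. \<Sum>j<7. b j *s red (gv G j))"
  proof
    fix r assume "r \<in> vecw ` set (allW G)"
    then obtain bs where bs: "bs \<in> set (List.n_lists 7 [False,True])" and r: "r = vecw (W G bs)"
      unfolding set_allW by blast
    define b where "b j = (if bs ! j then 1 else 0 :: 2)" for j
    have l: "length bs = 7" using bs by (simp only: set_n_lists mem_Collect_eq)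
    have "bsof b = bs"
    proof (rule nth_equalityI)
      show "length (bsof b) = length bs" using l by (simp add: bsof_def)
      fix i assume "i < length (bsof b)"
      then have "i < 7" by (simp add: bsof_def)
      then show "bsof b ! i = bs ! i" by (simp add: bsof_def b_def)
    qed
    then have "r = (\<Sum>j<7. b j *s red (gv G j))" using r bridge[of b G] by simp
    then show "r \<in> range (\<lambda>b. \<Sum>j<7. b j *s red (gv G j))" by blast
  qed
qed

definition chk :: "int list list \<Rightarrow> bool" where
 "chk G \<longleftrightarrow>
   list_all (\<lambda>j. list_all (\<lambda>m. sum_list (map (\<lambda>t. G!j!t * G!m!t) [0..<40]) mod 4 = 0) [0..<7]) [0..<7] \<and>
   list_all (\<lambda>j. sum_list (map (\<lambda>t. ((G!j!t) mod 4)^2) [0..<40]) mod 8 = 0) [0..<7] \<and>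
   list_all (\<lambda>j. list_all (\<lambda>m. odd (G!j!m) = (j = m)) [0..<7]) [0..<7] \<and>
   W G (replicate 7 True) = replicate 40 True \<and>
   list_all (\<lambda>a. list_all (\<lambda>c. a = c \<or> list_ex (\<lambda>j. odd (G!j!a) \<noteq> odd (G!j!c)) [0..<7]) [0..<40]) [0..<40] \<and>
   length (filter (\<lambda>t. G!0!t mod 4 = 1) [0..<40]) + 4 * length (filter (\<lambda>t. G!0!t mod 4 = 2) [0..<40])
     + length (filter (\<lambda>t. G!0!t mod 4 = 3) [0..<40]) = 16"

definition chkw :: "int list list \<Rightarrow> bool" where
 "chkw G \<longleftrightarrow> list_all (\<lambda>w. cnt w = 0 \<or> 16 \<le> cnt w) (allW G)"

lemma of_int_4_eq: "(of_int z :: 4) = of_int c \<longleftrightarrow> z mod 4 = c mod 4"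
  by (metis bit0.Rep_inject_sym rep4_of_int)

lemma inst_orth: assumes c: "chk G" and j: "j < (7::nat)" and m: "m < (7::nat)"
  shows "z4_inner (gv G j) (gv G m) = 0"
proof -
  have c1: "\<forall>j\<in>set [0..<7]. \<forall>m\<in>set [0..<7]. sum_list (map (\<lambda>t. G!j!t * G!m!t) [0..<40]) mod 4 = 0"
    using c unfolding chk_def list_all_iff by blast
  have "j \<in> set [0..<7]" "m \<in> set [0..<7]" using j m by auto
  then have "sum_list (map (\<lambda>t. G!j!t * G!m!t) [0..<40]) mod 4 = 0"
    by (rule c1[rule_format])
  then have "(4::int) dvd (\<Sum>t<40. G!j!t * G!m!t)" by (simp only: sum_upt_list dvd_eq_mod_eq_0)
  then have "(of_int (\<Sum>t<40. G!j!t * G!m!t) :: 4) = 0" by (simp only: of_int_eq_0_4)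
  moreover have "z4_inner (gv G j) (gv G m) = of_int (\<Sum>t<40. G!j!t * G!m!t)"
    using sum_ix[of "\<lambda>t. (of_int (G!j!t * G!m!t) :: 4)"]
    by (simp add: z4_inner_def gv_def)
  ultimately show ?thesis by simp
qed

lemma inst_q8: assumes c: "chk G" and j: "j < (7::nat)" shows "8 dvd Q (gv G j)"
proof -
  have c2: "\<forall>j\<in>set [0..<7]. sum_list (map (\<lambda>t. ((G!j!t) mod 4)^2) [0..<40]) mod 8 = 0"
    using c unfolding chk_def list_all_iff by blast
  have "j \<in> set [0..<7]" using j by auto
  then have "sum_list (map (\<lambda>t. ((G!j!t) mod 4)^2) [0..<40]) mod 8 = 0"
    by (rule c2[rule_format])
  moreover have "Q (gv G j) = sum_list (map (\<lambda>t. ((G!j!t) mod 4)^2) [0..<40])"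
    using sum_ix[of "\<lambda>t. ((G!j!t) mod 4)^2"] by (simp add: Q_def gv_def rep4_of_int sum_upt_list)
  ultimately show ?thesis by (simp add: dvd_eq_mod_eq_0)
qed

lemma inst_piv: assumes c: "chk G" and j: "j < (7::nat)" and m: "m < (7::nat)"
  shows "red (gv G j) $ of_nat m = (if j = m then 1 else 0)"
proof -
  have c3: "\<forall>j\<in>set [0..<7]. \<forall>m\<in>set [0..<7]. odd (G!j!m) = (j = m)"
    using c unfolding chk_def list_all_iff by blast
  have "j \<in> set [0..<7]" "m \<in> set [0..<7]" using j m by auto
  then have "odd (G!j!m) = (j = m)" by (rule c3[rule_format])
  then show ?thesis using m by (simp add: red_gv ix_of_nat of_int_2)
qed

lemma inst_ones: assumes c: "chk G" shows "\<exists>b. (\<chi> i. 1) = (\<Sum>j<7. b j *s red (gv G j))"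
proof -
  have c4: "W G (replicate 7 True) = replicate 40 True"
    using c unfolding chk_def by blast
  have "bsof (\<lambda>_. 1) = replicate 7 True"
    unfolding bsof_def by (simp only: map_replicate_const length_upt simp_thms diff_zero)
  then have "W G (bsof (\<lambda>_. 1)) = replicate 40 True" using c4 by (simp only:)
  moreover have "vecw (replicate 40 True) = (\<chi> i. 1)"
    unfolding vecw_def vec_eq_iff by (simp only: vec_lambda_beta nth_replicate[OF ix_lt] if_True simp_thms)
  ultimately have "(\<Sum>j<7. (\<lambda>_. 1) j *s red (gv G j)) = (\<chi> i. 1)"
    unfolding bridge by (simp only:)
  then show ?thesis by (rule exI[of _ "\<lambda>_. 1", OF sym])
qed

lemma inst_wt: assumes cw: "chkw G"
  shows "(\<Sum>j<7. b j *s red (gv G j)) = 0 \<or> 16 \<le> bwt (\<Sum>j<7. b j *s red (gv G j))"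
proof -
  let ?w = "W G (bsof b)"
  have "?w \<in> set (allW G)" unfolding set_allW by (rule imageI[OF bsof_in])
  then have "cnt ?w = 0 \<or> 16 \<le> cnt ?w" using cw unfolding chkw_def list_all_iff by blast
  then show ?thesis
    unfolding bridge using vecw_cnt0[of ?w] bwt_vecw[of ?w] by auto
qed

lemma inst_cols: assumes c: "chk G" and ac: "a \<noteq> c"
  shows "\<exists>j<7. red (gv G j) $ a \<noteq> red (gv G j) $ c"
proof -
  have c5: "\<forall>a\<in>set [0..<40]. \<forall>c\<in>set [0..<40]. a = c \<or> (\<exists>j\<in>set [0..<7]. odd (G!j!a) \<noteq> odd (G!j!c))"
    using c unfolding chk_def list_all_iff list_ex_iff by blast
  have "ix a \<noteq> ix c" using ac ix_inj by (meson injD)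
  have "ix a \<in> set [0..<40]" "ix c \<in> set [0..<40]" using ix_lt[of a] ix_lt[of c] by auto
  then have "ix a = ix c \<or> (\<exists>j\<in>set [0..<7]. odd (G!j!ix a) \<noteq> odd (G!j!ix c))"
    by (rule c5[rule_format])
  then have "\<exists>j\<in>set [0..<7]. odd (G!j!ix a) \<noteq> odd (G!j!ix c)" using \<open>ix a \<noteq> ix c\<close> by (simp only: simp_thms)
  then obtain j where j: "j \<in> set [0..<7]" and o: "odd (G!j!ix a) \<noteq> odd (G!j!ix c)" by blast
  have "j < 7" using j by simp
  moreover have "red (gv G j) $ a \<noteq> red (gv G j) $ c"
    using o by (simp add: red_gv of_int_2)
  ultimately show ?thesis by blast
qed

lemma inst_att: assumes c: "chk G" shows "\<exists>j<7. eucl_weight (gv G j) = 16"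
proof -
  have c6: "length (filter (\<lambda>t. G!0!t mod 4 = 1) [0..<40]) + 4 * length (filter (\<lambda>t. G!0!t mod 4 = 2) [0..<40])
     + length (filter (\<lambda>t. G!0!t mod 4 = 3) [0..<40]) = 16"
    using c unfolding chk_def by blast
  have e1: "(of_int z :: 4) = 1 \<longleftrightarrow> z mod 4 = 1" for z using of_int_4_eq[of z 1] by simp
  have e2: "(of_int z :: 4) = 2 \<longleftrightarrow> z mod 4 = 2" for z using of_int_4_eq[of z 2] by simp
  have e3: "(of_int z :: 4) = 3 \<longleftrightarrow> z mod 4 = 3" for z using of_int_4_eq[of z 3] by simp
  have "eucl_weight (gv G 0) = 16"
    using c6 by (simp only: eucl_weight_def gv_def vec_lambda_beta e1 e2 e3
       card_ix[of "\<lambda>t. G!0!t mod 4 = 1"] card_ix[of "\<lambda>t. G!0!t mod 4 = 2"] card_ix[of "\<lambda>t. G!0!t mod 4 = 3"])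
  then show ?thesis by (intro exI[of _ 0]) simp
qed

lemma zcode_inst: assumes c: "chk G" and cw: "chkw G" shows "zcode (gv G) 7 (\<lambda>m. of_nat m)"
  unfolding zcode_def using inst_orth[OF c] inst_q8[OF c] inst_piv[OF c] inst_ones[OF c]
     inst_wt[OF cw] inst_cols[OF c] inst_att[OF c] by blast

definition G1 :: "int list list" where
 "G1 = [[1,0,0,0,0,0,0,1,0,1,1,0,0,0,1,1,0,1,0,1,1,0,0,1,0,1,1,0,1,0,0,0,1,0,1,0,0,0,0,1],
  [0,1,0,0,0,0,0,0,1,3,0,1,0,1,1,0,1,1,1,1,1,0,1,0,0,1,1,1,1,1,1,0,0,1,1,1,1,1,0,1],
  [0,0,1,0,0,0,0,3,1,1,1,1,1,1,0,0,0,0,0,0,0,0,0,0,0,0,0,0,0,0,0,0,1,1,1,1,1,1,1,1],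
  [0,0,0,1,0,0,0,3,0,0,1,3,0,0,0,0,1,1,0,0,1,1,1,0,0,0,1,1,0,0,1,1,1,1,0,0,1,0,0,0],
  [0,0,0,0,1,0,0,0,0,3,0,1,0,0,3,3,1,0,0,1,0,1,1,0,1,0,1,0,0,1,0,0,1,0,0,1,0,1,1,0],
  [0,0,0,0,0,1,0,1,1,3,0,3,1,0,0,1,1,1,1,1,0,1,0,1,1,0,1,1,1,1,0,1,1,0,1,1,1,0,1,0],
  [0,0,0,0,0,0,1,1,0,0,0,0,3,3,0,0,1,1,1,1,0,0,0,3,1,1,0,0,0,0,1,1,0,0,1,1,1,0,0,0]]"

definition G2 :: "int list list" where
 "G2 = [[1,0,0,0,0,0,0,1,0,1,0,1,1,1,0,0,0,1,0,0,1,0,0,0,1,0,0,1,0,0,1,0,0,1,0,1,1,1,0,1],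
  [0,1,0,0,0,0,0,0,1,3,1,1,1,0,0,0,1,1,1,1,1,1,0,1,1,1,0,0,0,1,1,1,1,1,1,1,0,0,1,1],
  [0,0,1,0,0,0,0,3,0,0,1,1,0,0,0,1,0,0,1,0,0,1,0,1,1,0,1,0,0,1,1,0,1,1,0,0,0,0,1,1],
  [0,0,0,1,0,0,0,3,0,3,0,3,1,1,1,1,1,0,1,1,0,1,1,1,0,1,1,0,1,1,0,1,0,1,0,1,1,1,0,1],
  [0,0,0,0,1,0,0,0,0,3,3,0,1,1,1,0,1,0,0,1,0,0,1,1,0,0,1,1,0,1,0,0,0,1,1,0,0,0,0,1],
  [0,0,0,0,0,1,0,0,3,3,0,0,0,0,0,3,0,0,1,3,1,0,1,0,0,3,0,1,1,1,1,0,1,1,0,0,0,1,0,0],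
  [0,0,0,0,0,0,1,0,3,0,0,3,1,0,3,0,0,1,1,1,0,0,0,1,0,0,0,0,1,0,1,1,0,1,1,0,1,0,1,0]]"

lemma chk1: "chk G1" by code_simp
lemma chk2: "chk G2" by code_simp

definition W16 :: "int list list \<Rightarrow> bool list list" where
  "W16 G = filter (\<lambda>w. cnt w = 16) (allW G)"
definition chkP :: "int list list \<Rightarrow> bool" where
  "chkP G = (let L = W16 G in list_all (\<lambda>a. list_all (\<lambda>b. list_all (\<lambda>c.
      (cnt (xorl a b) = 16 \<and> cnt (xorl a c) = 16) \<longrightarrow> b = c \<or> c = xorl a b) L) L) L)"

lemma chkw1: "chkw G1" by code_simp
lemma chkw2: "chkw G2" by code_simp
lemma chkP2: "chkP G2" by code_simp

definition "bu = [False, False, False, False, True, True, True]"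
definition "bv = [False, False, False, False, False, False, True]"
definition "bw = [False, False, False, False, False, True, True]"
lemma wit1: "cnt (W G1 bu) = 16 \<and> cnt (W G1 bv) = 16 \<and> cnt (W G1 bw) = 16 \<and>
  cnt (xorl (W G1 bu) (W G1 bv)) = 16 \<and> cnt (xorl (W G1 bu) (W G1 bw)) = 16 \<and>
  W G1 bv \<noteq> W G1 bw \<and> W G1 bw \<noteq> xorl (W G1 bu) (W G1 bv)" by code_simp

lemma length_xorl: "length a = 40 \<Longrightarrow> length c = 40 \<Longrightarrow> length (xorl a c) = 40"
  by (simp add: xorl_def)

lemma len_allW: "w \<in> set (allW G) \<Longrightarrow> length w = 40"
  by (auto simp: set_allW)

lemma Pprop_yes: "Pprop (vecw ` set (allW G1))"
proof -
  have inw: "W G1 bs \<in> set (allW G1)" if "length bs = 7" for bs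
    unfolding set_allW using that by (intro imageI) (auto simp: set_n_lists)
  have l: "length bu = 7" "length bv = 7" "length bw = 7" by (simp_all add: bu_def bv_def bw_def)
  let ?u = "W G1 bu" and ?v = "W G1 bv" and ?w = "W G1 bw"
  have L: "length ?u = 40" "length ?v = 40" "length ?w = 40" by simp_all
  show ?thesis unfolding Pprop_def
    apply (rule bexI[of _ "vecw ?u"], rule bexI[of _ "vecw ?v"], rule bexI[of _ "vecw ?w"])
    using wit1 L inw[OF l(1)] inw[OF l(2)] inw[OF l(3)]
    by (simp_all add: vecw_add bwt_vecw vecw_inj length_xorl)
qed

lemma Pprop_no: assumes c: "chkP G" shows "\<not> Pprop (vecw ` set (allW G))"
proof
  assume "Pprop (vecw ` set (allW G))"
  then obtain a b d where ab: "a \<in> set (allW G)" "b \<in> set (allW G)" "d \<in> set (allW G)"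
    and P: "bwt (vecw a) = 16" "bwt (vecw b) = 16" "bwt (vecw d) = 16"
      "bwt (vecw a + vecw b) = 16" "bwt (vecw a + vecw d) = 16" "vecw b \<noteq> vecw d"
      "vecw d \<noteq> vecw a + vecw b"
    unfolding Pprop_def by blast
  have L: "length a = 40" "length b = 40" "length d = 40" using ab len_allW by auto
  have cnts: "cnt a = 16" "cnt b = 16" "cnt d = 16" "cnt (xorl a b) = 16" "cnt (xorl a d) = 16"
    using P L by (simp_all add: bwt_vecw vecw_add length_xorl)
  have inW: "a \<in> set (W16 G)" "b \<in> set (W16 G)" "d \<in> set (W16 G)"
    using ab cnts by (simp_all add: W16_def)
  have "b = d \<or> d = xorl a b"
    using c inW cnts unfolding chkP_def Let_def list_all_iff by blast
  then show False using P L by (auto simp: vecw_add)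
qed

interpretation c1: zcode "gv G1" 7 "\<lambda>m. of_nat m" by (rule zcode_inst[OF chk1 chkw1])
interpretation c2: zcode "gv G2" 7 "\<lambda>m. of_nat m" by (rule zcode_inst[OF chk2 chkw2])

lemma RR_eq1: "c1.RR = vecw ` set (allW G1)"
  unfolding c1.RR_def c1.lc_def c1.rb_def by (rule range_lc)
lemma RR_eq2: "c2.RR = vecw ` set (allW G2)"
  unfolding c2.RR_def c2.lc_def c2.rb_def by (rule range_lc)

theorem mainTheorem11:
  shows "\<exists>C D :: (4^40) set. extremal_type_II C \<and> extremal_type_II D \<and>
           binary_dim (residue C) = 7 \<and> binary_dim (residue D) = 7 \<and>
           \<not> z4_equivalent C D"
proof (intro exI conjI)
  show "extremal_type_II c1.CC" by (rule c1.extremal) simp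
  show "extremal_type_II c2.CC" by (rule c2.extremal) simp
  show "binary_dim (residue c1.CC) = 7" by (rule c1.dim)
  show "binary_dim (residue c2.CC) = 7" by (rule c2.dim)
  show "\<not> z4_equivalent c1.CC c2.CC"
    by (rule not_equiv) (simp_all add: c1.residue_eq c2.residue_eq RR_eq1 RR_eq2 Pprop_yes Pprop_no[OF chkP2])
qed

end
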